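(* Let $k\geq 2$ and define $f(x,y)=(x+y)^{2}x^{2}-\left(x+\frac{y}{2}\right)^{2}(2x+y-2)$. If $k\leq x\leq k+(2k-1)^{2}$ and $0\leq y\leq (2k-1)^{2}$, then $f(x,y)>0$.
   Context: Here $x,y$ are real numbers. *)

theory Defs
  imports Complex_Main
begin

definition f :: "real \<Rightarrow> real \<Rightarrow> real" where
  "f x y = (x + y)^2 * x^2 - (x + y / 2)^2 * (2 * x + y - 2)"

end

theory Submission
  imports Defs
begin

lemma aux:
  fixes x y :: real
  assumes x: "x \<ge> 2" and y0: "0 \<le> y" and yb: "y \<le> (2*x-1)^2"
  shows "f x y > 0"
proof -
  have e: "f x y = (x^4-2*x^3+2*x^2) + y*(2*x^3-3*x^2+2*x) + y^2*(x^2 - 3*x/2 + 1/2) - y^3/4"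
    by (simp add: f_def power2_eq_square power3_eq_cube power4_eq_xxxx algebra_simps)
  have h1: "y^3 \<le> y^2*(2*x-1)^2"
    using mult_left_mono[OF yb, of "y^2"] by (simp add: power3_eq_cube power2_eq_square mult.assoc)
  have h2: "y^2*(2*x-1) \<le> y*(2*x-1)^2*(2*x-1)"
    using mult_right_mono[OF mult_left_mono[OF yb y0], of "2*x-1"] x
    by (simp add: power2_eq_square mult.assoc)
  have p: "x^4-2*x^3+2*x^2 > 0"
  proof -
    have "x^4-2*x^3+2*x^2 = x^2*((x-1)^2+1)" by (simp add: power2_eq_square power3_eq_cube power4_eq_xxxx algebra_simps)
    moreover have "x^2*((x-1)^2+1) > 0" using x by (intro mult_pos_pos) (auto intro: add_nonneg_pos)
    ultimately show ?thesis by simp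
  qed
  have q: "y*(x/2+1/4) \<ge> 0" using y0 x by simp
  have "f x y \<ge> (x^4-2*x^3+2*x^2) + y*(x/2+1/4)"
    using e h1 h2 by (simp add: power2_eq_square power3_eq_cube algebra_simps)
  thus ?thesis using p q by linarith
qed

theorem lemma3p3:
  fixes k :: nat and x y :: real
  assumes "k \<ge> 2"
    and "real k \<le> x" and "x \<le> real k + (2 * real k - 1)^2"
    and "0 \<le> y" and "y \<le> (2 * real k - 1)^2"
  shows "f x y > 0"
proof (rule aux)
  have k: "real k \<ge> 2" using assms(1) by simp
  show "x \<ge> 2" using k assms(2) by linarith
  show "0 \<le> y" by fact
  have "(2 * real k - 1)^2 \<le> (2*x-1)^2" using k assms(2) by (intro power_mono) auto
  thus "y \<le> (2*x-1)^2" using assms(5) by linarith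
qed

end
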